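(* Let $(D,\prec_\vdash,\prec_\dashv,\succ_\vdash,\succ_\dashv,\alpha)$ be a Hom-quadri-dendriform algebra. Define $x\vdash y=x\prec_\vdash y+x\succ_\vdash y$ and $x\dashv y=x\prec_\dashv y+x\succ_\dashv y$ for all $x,y\in D$. Then $(D,\vdash,\dashv,\alpha)$ is a Hom-diassociative algebra.
   Context: All vector spaces are over a field of characteristic zero. A Hom-quadri-dendriform algebra is a tuple $(D,\prec_\vdash,\prec_\dashv,\succ_\vdash,\succ_\dashv,\alpha)$ with $D$ a vector space, four bilinear operations $\prec_\vdash,\prec_\dashv,\succ_\vdash,\succ_\dashv:D\times D\to D$ and a linear map $\alpha:D\to D$ such that for all $x,y,z\in D$: (Q1) $(x\prec_\vdash y)\prec_\vdash\alpha(z)=(x\prec_\dashv y)\prec_\vdash\alpha(z)=\alpha(x)\prec_\vdash(y\prec_\vdash z+y\succ_\vdash z)$; (Q2) $(x\succ_\vdash y)\prec_\vdash\alpha(z)=(x\succ_\dashv y)\prec_\vdash\alpha(z)=\alpha(x)\succ_\vdash(y\prec_\vdash z)$; (Q3) $\alpha(x)\succ_\vdash(y\succ_\vdash z)=(x\prec_\vdash y+x\succ_\vdash y)\succ_\vdash\alpha(z)=(x\prec_\dashv y+x\succ_\dashv y)\succ_\vdash\alpha(z)$; (Q4) $\alpha(x)\succ_\vdash(y\succ_\vdash z)=(x\prec_\dashv y+x\succ_\vdash y)\succ_\vdash\alpha(z)=(x\prec_\vdash y+x\succ_\dashv y)\succ_\vdash\alpha(z)$; (Q5) $(x\prec_\vdash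 y)\prec_\dashv\alpha(z)=\alpha(x)\prec_\vdash(y\prec_\dashv z+y\succ_\dashv z)$; (Q6) $(x\succ_\vdash y)\prec_\dashv\alpha(z)=\alpha(x)\succ_\vdash(y\prec_\dashv z)$; (Q7) $\alpha(x)\succ_\vdash(y\succ_\dashv z)=(x\prec_\vdash y+x\succ_\vdash y)\succ_\dashv\alpha(z)$; (Q8) $(x\prec_\dashv y)\prec_\dashv\alpha(z)=\alpha(x)\prec_\dashv(y\prec_\vdash z+y\succ_\vdash z)=\alpha(x)\prec_\dashv(y\prec_\dashv z+y\succ_\dashv z)$; (Q9) $(x\prec_\dashv y)\prec_\dashv\alpha(z)=\alpha(x)\prec_\dashv(y\prec_\vdash z+y\succ_\dashv z)=\alpha(x)\prec_\dashv(y\prec_\dashv z+y\succ_\vdash z)$; (Q10) $(x\succ_\dashv y)\prec_\dashv\alpha(z)=\alpha(x)\succ_\dashv(y\prec_\vdash z)=\alpha(x)\succ_\dashv(y\prec_\dashv z)$; (Q11) $\alpha(x)\succ_\dashv(y\succ_\vdash z)=\alpha(x)\succ_\dashv(y\succ_\dashv z)=(x\prec_\dashv y+x\succ_\dashv y)\succ_\dashv\alpha(z)$. A Hom-diassociative algebra is a tuple $(D,\dashv,\vdash,\alpha)$ with $\dashv,\vdash$ bilinear and $\alpha$ linear such that for all $x,y,z\in D$: $(x\dashv y)\dashv\alpha(z)=\alpha(x)\dashv(y\dashv z)$; $(x\dashv y)\dashv\alpha(z)=\alpha(x)\dashv(y\vdash z)$; $(x\vdash y)\dashv\alpha(z)=\alpha(x)\vdash(y\dashv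 z)$; $(x\dashv y)\vdash\alpha(z)=\alpha(x)\vdash(y\vdash z)$; $(x\vdash y)\vdash\alpha(z)=\alpha(x)\vdash(y\vdash z)$. *)

theory Defs
  imports Complex_Main
begin

definition bilinear_op ::
  "('k::field \<Rightarrow> 'v::ab_group_add \<Rightarrow> 'v) \<Rightarrow> ('v \<Rightarrow> 'v \<Rightarrow> 'v) \<Rightarrow> bool" where
  "bilinear_op scale m \<longleftrightarrow>
     (\<forall>x. Vector_Spaces.linear scale scale (m x)) \<and>
     (\<forall>y. Vector_Spaces.linear scale scale (\<lambda>x. m x y))"

text \<open>Arguments: scale, pl = prec_vdash, pr = prec_dashv, sl = succ_vdash,
  sr = succ_dashv, alpha.\<close>

definition hom_quadri_dendriform ::
  "('k::field_char_0 \<Rightarrow> 'v::ab_group_add \<Rightarrow> 'v) \<Rightarrow> ('v \<Rightarrow> 'v \<Rightarrow> 'v) \<Rightarrow> ('v \<Rightarrow> 'v \<Rightarrow> 'v)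
     \<Rightarrow> ('v \<Rightarrow> 'v \<Rightarrow> 'v) \<Rightarrow> ('v \<Rightarrow> 'v \<Rightarrow> 'v) \<Rightarrow> ('v \<Rightarrow> 'v) \<Rightarrow> bool" where
  "hom_quadri_dendriform scale pl pr sl sr \<alpha> \<longleftrightarrow>
     vector_space scale \<and>
     bilinear_op scale pl \<and> bilinear_op scale pr \<and> bilinear_op scale sl \<and> bilinear_op scale sr \<and>
     Vector_Spaces.linear scale scale \<alpha> \<and>
     (\<forall>x y z.
       \<comment> \<open>Q1\<close>
       pl (pl x y) (\<alpha> z) = pl (pr x y) (\<alpha> z) \<and>
       pl (pr x y) (\<alpha> z) = pl (\<alpha> x) (pl y z + sl y z) \<and>
       \<comment> \<open>Q2\<close>
       pl (sl x y) (\<alpha> z) = pl (sr x y) (\<alpha> z) \<and>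
       pl (sr x y) (\<alpha> z) = sl (\<alpha> x) (pl y z) \<and>
       \<comment> \<open>Q3\<close>
       sl (\<alpha> x) (sl y z) = sl (pl x y + sl x y) (\<alpha> z) \<and>
       sl (pl x y + sl x y) (\<alpha> z) = sl (pr x y + sr x y) (\<alpha> z) \<and>
       \<comment> \<open>Q4\<close>
       sl (\<alpha> x) (sl y z) = sl (pr x y + sl x y) (\<alpha> z) \<and>
       sl (pr x y + sl x y) (\<alpha> z) = sl (pl x y + sr x y) (\<alpha> z) \<and>
       \<comment> \<open>Q5\<close>
       pr (pl x y) (\<alpha> z) = pl (\<alpha> x) (pr y z + sr y z) \<and>
       \<comment> \<open>Q6\<close>
       pr (sl x y) (\<alpha> z) = sl (\<alpha> x) (pr y z) \<and>
       \<comment> \<open>Q7\<close>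
       sl (\<alpha> x) (sr y z) = sr (pl x y + sl x y) (\<alpha> z) \<and>
       \<comment> \<open>Q8\<close>
       pr (pr x y) (\<alpha> z) = pr (\<alpha> x) (pl y z + sl y z) \<and>
       pr (\<alpha> x) (pl y z + sl y z) = pr (\<alpha> x) (pr y z + sr y z) \<and>
       \<comment> \<open>Q9\<close>
       pr (pr x y) (\<alpha> z) = pr (\<alpha> x) (pl y z + sr y z) \<and>
       pr (\<alpha> x) (pl y z + sr y z) = pr (\<alpha> x) (pr y z + sl y z) \<and>
       \<comment> \<open>Q10\<close>
       pr (sr x y) (\<alpha> z) = sr (\<alpha> x) (pl y z) \<and>
       sr (\<alpha> x) (pl y z) = sr (\<alpha> x) (pr y z) \<and>
       \<comment> \<open>Q11\<close>
       sr (\<alpha> x) (sl y z) = sr (\<alpha> x) (sr y z) \<and>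
       sr (\<alpha> x) (sr y z) = sr (pr x y + sr x y) (\<alpha> z))"

text \<open>Hom-diassociative algebra (D, dashv, vdash, alpha); ld = dashv, rd = vdash.\<close>

definition hom_diassociative ::
  "('k::field_char_0 \<Rightarrow> 'v::ab_group_add \<Rightarrow> 'v) \<Rightarrow> ('v \<Rightarrow> 'v \<Rightarrow> 'v) \<Rightarrow> ('v \<Rightarrow> 'v \<Rightarrow> 'v)
     \<Rightarrow> ('v \<Rightarrow> 'v) \<Rightarrow> bool" where
  "hom_diassociative scale ld rd \<alpha> \<longleftrightarrow>
     vector_space scale \<and>
     bilinear_op scale ld \<and> bilinear_op scale rd \<and>
     Vector_Spaces.linear scale scale \<alpha> \<and>
     (\<forall>x y z.
       ld (ld x y) (\<alpha> z) = ld (\<alpha> x) (ld y z) \<and>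
       ld (ld x y) (\<alpha> z) = ld (\<alpha> x) (rd y z) \<and>
       ld (rd x y) (\<alpha> z) = rd (\<alpha> x) (ld y z) \<and>
       rd (ld x y) (\<alpha> z) = rd (\<alpha> x) (rd y z) \<and>
       rd (rd x y) (\<alpha> z) = rd (\<alpha> x) (rd y z))"

end

theory Submission
  imports Defs
begin

lemma lin_add_fun:
  assumes "Vector_Spaces.linear s s f" "Vector_Spaces.linear s s g"
  shows "Vector_Spaces.linear s s (\<lambda>x. f x + g x)"
  using assms unfolding Vector_Spaces.linear_iff
  by (auto simp: algebra_simps vector_space_def module.scale_right_distrib)

lemma bil_add:
  assumes "bilinear_op s m" "bilinear_op s n"
  shows "bilinear_op s (\<lambda>x y. m x y + n x y)"
  using assms unfolding bilinear_op_def by (auto intro: lin_add_fun)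

lemma bil_addL:
  assumes "bilinear_op s m" shows "m (a + b) c = m a c + m b c"
  using assms unfolding bilinear_op_def Vector_Spaces.linear_iff by blast

lemma bil_addR:
  assumes "bilinear_op s m" shows "m c (a + b) = m c a + m c b"
  using assms unfolding bilinear_op_def Vector_Spaces.linear_iff by blast

theorem proposition3p3:
  fixes scale :: "'k::field_char_0 \<Rightarrow> 'v::ab_group_add \<Rightarrow> 'v"
    and pl pr sl sr :: "'v \<Rightarrow> 'v \<Rightarrow> 'v" and \<alpha> :: "'v \<Rightarrow> 'v"
  assumes "hom_quadri_dendriform scale pl pr sl sr \<alpha>"
  shows "hom_diassociative scale (\<lambda>x y. pr x y + sr x y) (\<lambda>x y. pl x y + sl x y) \<alpha>"
proof -
  note H = assms[unfolded hom_quadri_dendriform_def]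
  have b: "bilinear_op scale pl" "bilinear_op scale pr" "bilinear_op scale sl" "bilinear_op scale sr"
    using H by auto
  note A = bil_addL[OF b(1)] bil_addL[OF b(2)] bil_addL[OF b(3)] bil_addL[OF b(4)]
           bil_addR[OF b(1)] bil_addR[OF b(2)] bil_addR[OF b(3)] bil_addR[OF b(4)]
  show ?thesis
    unfolding hom_diassociative_def
  proof (intro conjI allI)
    show "vector_space scale" "Vector_Spaces.linear scale scale \<alpha>" using H by auto
    show "bilinear_op scale (\<lambda>x y. pr x y + sr x y)" "bilinear_op scale (\<lambda>x y. pl x y + sl x y)"
      using b bil_add by auto
  next
    fix x y z
    have q: "pl (pl x y) (\<alpha> z) = pl (pr x y) (\<alpha> z) \<and>
       pl (pr x y) (\<alpha> z) = pl (\<alpha> x) (pl y z + sl y z) \<and>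
       pl (sl x y) (\<alpha> z) = pl (sr x y) (\<alpha> z) \<and>
       pl (sr x y) (\<alpha> z) = sl (\<alpha> x) (pl y z) \<and>
       sl (\<alpha> x) (sl y z) = sl (pl x y + sl x y) (\<alpha> z) \<and>
       sl (pl x y + sl x y) (\<alpha> z) = sl (pr x y + sr x y) (\<alpha> z) \<and>
       sl (\<alpha> x) (sl y z) = sl (pr x y + sl x y) (\<alpha> z) \<and>
       sl (pr x y + sl x y) (\<alpha> z) = sl (pl x y + sr x y) (\<alpha> z) \<and>
       pr (pl x y) (\<alpha> z) = pl (\<alpha> x) (pr y z + sr y z) \<and>
       pr (sl x y) (\<alpha> z) = sl (\<alpha> x) (pr y z) \<and>
       sl (\<alpha> x) (sr y z) = sr (pl x y + sl x y) (\<alpha> z) \<and>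
       pr (pr x y) (\<alpha> z) = pr (\<alpha> x) (pl y z + sl y z) \<and>
       pr (\<alpha> x) (pl y z + sl y z) = pr (\<alpha> x) (pr y z + sr y z) \<and>
       pr (pr x y) (\<alpha> z) = pr (\<alpha> x) (pl y z + sr y z) \<and>
       pr (\<alpha> x) (pl y z + sr y z) = pr (\<alpha> x) (pr y z + sl y z) \<and>
       pr (sr x y) (\<alpha> z) = sr (\<alpha> x) (pl y z) \<and>
       sr (\<alpha> x) (pl y z) = sr (\<alpha> x) (pr y z) \<and>
       sr (\<alpha> x) (sl y z) = sr (\<alpha> x) (sr y z) \<and>
       sr (\<alpha> x) (sr y z) = sr (pr x y + sr x y) (\<alpha> z)"
      using H by blast
    show "pr (pr x y + sr x y) (\<alpha> z) + sr (pr x y + sr x y) (\<alpha> z) =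
          pr (\<alpha> x) (pr y z + sr y z) + sr (\<alpha> x) (pr y z + sr y z)"
      using q A by (simp add: algebra_simps)
    show "pr (pr x y + sr x y) (\<alpha> z) + sr (pr x y + sr x y) (\<alpha> z) =
          pr (\<alpha> x) (pl y z + sl y z) + sr (\<alpha> x) (pl y z + sl y z)"
      using q A by (simp add: algebra_simps)
    show "pr (pl x y + sl x y) (\<alpha> z) + sr (pl x y + sl x y) (\<alpha> z) =
          pl (\<alpha> x) (pr y z + sr y z) + sl (\<alpha> x) (pr y z + sr y z)"
      using q A by (simp add: algebra_simps)
    show "pl (pr x y + sr x y) (\<alpha> z) + sl (pr x y + sr x y) (\<alpha> z) =
          pl (\<alpha> x) (pl y z + sl y z) + sl (\<alpha> x) (pl y z + sl y z)"
      using q A by (simp add: algebra_simps)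
    show "pl (pl x y + sl x y) (\<alpha> z) + sl (pl x y + sl x y) (\<alpha> z) =
          pl (\<alpha> x) (pl y z + sl y z) + sl (\<alpha> x) (pl y z + sl y z)"
      using q A by (simp add: algebra_simps)
  qed
qed

end
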